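(* Let $T$ be an $S$-regular matrix with vertex weights $b\in\mathbb{R}^k$ and edge weights $F\in M_k(\mathbb{C})$, whose underlying graph $G=(V,E)$ has equitable partition $V_1,\dots,V_k$ with quotient matrix $S=(s_{ij})$ and cell function $\tau$. Let $M=(S\circ F)+\operatorname{diag}(b)$, where $S\circ F$ is the entrywise product. Then: (1) $M$ is diagonalizable; (2) if $\lambda$ is an eigenvalue of $M$ with eigenvector $\psi\in\mathbb{R}^k$, then $\lambda$ is an eigenvalue of $T$ with eigenvector $\overline{\psi}\in\mathbb{R}^{|V|}$ defined by $\overline{\psi}(v)=\psi(\tau(v))$; (3) if $\phi$ is an eigenvector of $T$ whose eigenvalue is not an eigenvalue of $M$, then $\sum_{v\in V_i}\phi(v)=0$ for every $1\le i\le k$, and $\sum_{v\in V}\phi(v)=0$.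
   Context: All graphs are simple, undirected and connected. A graph $G=(V,E)$ is $S$-regular, for a $k\times k$ matrix $S=(s_{ij})$ with nonnegative integer entries, if $V$ has a partition into nonempty cells $V_1,\dots,V_k$ such that every $v\in V_i$ has exactly $s_{ij}$ neighbours in $V_j$. Write $n_i=|V_i|$; then $s_{ij}n_i=s_{ji}n_j$ for all $i,j$. The cell function $\tau:V\to\{1,\dots,k\}$ sends $v\in V_i$ to $i$. The underlying graph of a matrix $T$ indexed by a set $V$ is the graph on $V$ with an edge $uv$ ($u\neq v$) iff $T_{uv}\neq 0$. An $S$-regular matrix is a Hermitian matrix $T$ indexed by $V$ such that: its underlying graph $G$ (ignoring loops) is $S$-regular with partition $V_1,\dots,V_k$; there is $b\in\mathbb{R}^k$ (vertex weights) with $T_{uu}=b(i)$ for $u\in V_i$; and there is $F\in M_k(\mathbb{C})$ (edge weights) with $F_{ij}\neq 0$ for all $i,j$ such that $T_{uv}=F_{ij}$ whenever $u\in V_i$, $v\in V_j$ are adjacent in $G$ (and $T_{uv}=0$ for distinct nonadjacent $u,v$). *)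

theory Defs
  imports "HOL-Analysis.Analysis"
begin

text \<open>Vertices are the elements of a finite type 'v; cells are indexed by a finite type 'k
  (k = CARD('k)). Matrices indexed by V are complex^'v^'v, by cells complex^'k^'k.\<close>

definition hermitian_mat :: "complex^'n^'n \<Rightarrow> bool" where
  "hermitian_mat T \<longleftrightarrow> (\<forall>u v. T$u$v = cnj (T$v$u))"

definition und_adj :: "complex^'n^'n \<Rightarrow> 'n \<Rightarrow> 'n \<Rightarrow> bool" where
  "und_adj T u v \<longleftrightarrow> u \<noteq> v \<and> T$u$v \<noteq> 0"

definition graph_connected :: "('n \<Rightarrow> 'n \<Rightarrow> bool) \<Rightarrow> bool" where
  "graph_connected E \<longleftrightarrow> (\<forall>u v. (E\<^sup>*\<^sup>*) u v)"

definition S_regular_graph :: "('v \<Rightarrow> 'v \<Rightarrow> bool) \<Rightarrow> nat^'k^'k \<Rightarrow> ('v \<Rightarrow> 'k) \<Rightarrow> bool" where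
  "S_regular_graph E S tau \<longleftrightarrow> surj tau \<and>
     (\<forall>v j. card {u. E v u \<and> tau u = j} = S$(tau v)$j)"

definition S_regular_matrix ::
  "complex^'v^'v \<Rightarrow> nat^'k^'k \<Rightarrow> ('v \<Rightarrow> 'k) \<Rightarrow> real^'k \<Rightarrow> complex^'k^'k \<Rightarrow> bool" where
  "S_regular_matrix T S tau b F \<longleftrightarrow>
     hermitian_mat T \<and>
     graph_connected (und_adj T) \<and>
     S_regular_graph (und_adj T) S tau \<and>
     (\<forall>u. T$u$u = complex_of_real (b$(tau u))) \<and>
     (\<forall>i j. F$i$j \<noteq> 0) \<and>
     (\<forall>u v. und_adj T u v \<longrightarrow> T$u$v = F$(tau u)$(tau v))"

definition quotient_mat :: "nat^'k^'k \<Rightarrow> real^'k \<Rightarrow> complex^'k^'k \<Rightarrow> complex^'k^'k" where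
  "quotient_mat S b F = (\<chi> i j. of_nat (S$i$j) * F$i$j + (if i = j then complex_of_real (b$i) else 0))"

definition diagonalizable_mat :: "complex^'n^'n \<Rightarrow> bool" where
  "diagonalizable_mat A \<longleftrightarrow>
     (\<exists>P D::complex^'n^'n. invertible P \<and> (\<forall>i j. i \<noteq> j \<longrightarrow> D$i$j = 0) \<and>
        A = P ** D ** matrix_inv P)"

definition is_eigenvector :: "complex^'n^'n \<Rightarrow> complex \<Rightarrow> complex^'n \<Rightarrow> bool" where
  "is_eigenvector A lam x \<longleftrightarrow> x \<noteq> 0 \<and> A *v x = lam *s x"

definition is_eigenvalue :: "complex^'n^'n \<Rightarrow> complex \<Rightarrow> bool" where
  "is_eigenvalue A lam \<longleftrightarrow> (\<exists>x. is_eigenvector A lam x)"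

end

theory Submission
  imports Defs
begin


definition ipw :: "('k::finite \<Rightarrow> real) \<Rightarrow> complex^'k \<Rightarrow> complex^'k \<Rightarrow> complex" where
  "ipw w x y = (\<Sum>i\<in>UNIV. complex_of_real (w i) * cnj (x$i) * y$i)"

lemma ipw_add_left: "ipw w (x + y) z = ipw w x z + ipw w y z"
  by (simp add: ipw_def sum.distrib[symmetric] algebra_simps)
lemma ipw_add_right: "ipw w z (x + y) = ipw w z x + ipw w z y"
  by (simp add: ipw_def sum.distrib[symmetric] algebra_simps)
lemma ipw_diff_right: "ipw w z (x - y) = ipw w z x - ipw w z y"
  by (simp add: ipw_def sum_subtractf[symmetric] algebra_simps)
lemma ipw_scale_left: "ipw w (c *s x) y = cnj c * ipw w x y"
  by (simp add: ipw_def sum_distrib_left algebra_simps)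
lemma ipw_scale_right: "ipw w y (c *s x) = c * ipw w y x"
  by (simp add: ipw_def sum_distrib_left algebra_simps)
lemma ipw_zero_right[simp]: "ipw w y 0 = 0"
  by (simp add: ipw_def)
lemma ipw_zero_left[simp]: "ipw w 0 y = 0"
  by (simp add: ipw_def)
lemma ipw_sym: "ipw w y x = cnj (ipw w x y)"
  by (simp add: ipw_def algebra_simps)
lemma ipw_sum_right: "finite A \<Longrightarrow> ipw w y (\<Sum>a\<in>A. f a *s g a) = (\<Sum>a\<in>A. f a * ipw w y (g a))"
  by (induction A rule: finite_induct) (auto simp: ipw_add_right ipw_scale_right)

lemma ipw_self: "ipw w x x = complex_of_real (\<Sum>i\<in>UNIV. w i * (cmod (x$i))^2)"
proof -
  have e: "\<And>i. complex_of_real (w i) * cnj (x$i) * x$i = complex_of_real (w i * (cmod (x$i))^2)"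
  proof -
    fix i
    have "cnj (x$i) * x$i = complex_of_real ((cmod (x$i))^2)"
      using complex_norm_square[of "x$i"] by (simp add: mult.commute)
    then show "complex_of_real (w i) * cnj (x$i) * x$i = complex_of_real (w i * (cmod (x$i))^2)"
      by (simp only: mult.assoc of_real_mult)
  qed
  show ?thesis unfolding ipw_def of_real_sum by (rule sum.cong) (auto simp only: e)
qed

lemma ipw_self_Re_nonneg: "(\<And>i. w i > 0) \<Longrightarrow> Re (ipw w x x) \<ge> 0"
  unfolding ipw_self Re_complex_of_real by (rule sum_nonneg) (simp add: less_imp_le)

lemma ipw_self_eq0: assumes "\<And>i. w i > 0" "ipw w x x = 0" shows "x = 0"
proof -
  have "(\<Sum>i\<in>UNIV. w i * (cmod (x$i))^2) = 0" using assms(2) unfolding ipw_self of_real_eq_0_iff .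
  then have "\<forall>i\<in>UNIV. w i * (cmod (x$i))^2 = 0"
    by (subst sum_nonneg_eq_0_iff[symmetric]) (auto intro!: mult_nonneg_nonneg less_imp_le[OF assms(1)])
  then show ?thesis using assms(1) by (auto simp: vec_eq_iff) (metis less_irrefl)
qed

lemma ipw_self_real: "ipw w x x = complex_of_real (Re (ipw w x x))"
  by (simp add: ipw_self)

lemma ipw_diff_left: "ipw w (x - y) z = ipw w x z - ipw w y z"
  by (simp add: ipw_def sum_subtractf[symmetric] algebra_simps)

lemma mv_scale: "(A::complex^'n^'m) *v (c *s x) = c *s (A *v x)"
  by (simp add: vec_eq_iff matrix_vector_mult_def sum_distrib_left algebra_simps)
lemma mv_add: "(A::complex^'n^'m) *v (x + y) = A *v x + A *v y"
  by (simp add: vec_eq_iff matrix_vector_mult_def sum.distrib algebra_simps)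

lemma quad_zero:
  fixes a c :: real
  assumes "\<And>t. 2*t*a + t^2*c \<le> 0"
  shows "a = 0"
proof -
  define d where "d = \<bar>c\<bar> + 1"
  have d: "d > 0" "d \<ge> 1" unfolding d_def by auto
  have "2*(a/d)*a + (a/d)^2*c \<le> 0" using assms .
  then have "(2*(a/d)*a + (a/d)^2*c) * d^2 \<le> 0" using d
    by (simp add: mult_nonpos_nonneg)
  moreover have "(2*(a/d)*a + (a/d)^2*c) * d^2 = a^2 * (2*d + c)" using d
    by (simp add: field_simps power2_eq_square)
  ultimately have "a^2 * (2*d + c) \<le> 0" by simp
  moreover have "2*d + c > 0" unfolding d_def by (cases "c \<ge> 0") auto
  ultimately have "a^2 \<le> 0" by (simp add: mult_le_0_iff)
  then show ?thesis by simp
qed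

lemma continuous_ipw[continuous_intros]:
  "continuous_on S f \<Longrightarrow> continuous_on S g \<Longrightarrow> continuous_on S (\<lambda>y. ipw w (f y) (g y))"
  unfolding ipw_def by (intro continuous_intros)

lemma continuous_mv[continuous_intros]:
  "continuous_on S f \<Longrightarrow> continuous_on S (\<lambda>y. (A::complex^'n^'m) *v f y)"
  unfolding matrix_vector_mult_def
  by (intro continuous_on_vec_lambda continuous_intros)

lemma eigen_in_complement:
  fixes A :: "complex^'k^'k" and w :: "'k \<Rightarrow> real"
  assumes wpos: "\<And>i. w i > 0"
    and sa: "\<And>x y. ipw w (A *v x) y = ipw w x (A *v y)"
    and beig: "\<And>b. b \<in> B \<Longrightarrow> \<exists>\<mu>. A *v b = \<mu> *s b"
    and U_def: "U = {y. \<forall>b\<in>B. ipw w b y = 0}"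
    and u: "u \<in> U" "u \<noteq> 0"
  shows "\<exists>v\<in>U. v \<noteq> 0 \<and> (\<exists>\<mu>. A *v v = \<mu> *s v)"
proof -
  have Uadd: "x + y \<in> U" if "x \<in> U" "y \<in> U" for x y
    using that unfolding U_def by (auto simp: ipw_add_right)
  have Udiff: "x - y \<in> U" if "x \<in> U" "y \<in> U" for x y
    using that unfolding U_def by (auto simp: ipw_diff_right)
  have Uscale: "c *s x \<in> U" if "x \<in> U" for x c
    using that unfolding U_def by (auto simp: ipw_scale_right)
  have Uinv: "A *v y \<in> U" if "y \<in> U" for y
  proof -
    { fix b assume bB: "b \<in> B"
      then obtain \<mu> where "A *v b = \<mu> *s b" using beig by blast
      then have "ipw w b (A *v y) = cnj \<mu> * ipw w b y" using sa[of b y] by (simp add: ipw_scale_left)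
      also have "\<dots> = 0" using that bB unfolding U_def by simp
      finally have "ipw w b (A *v y) = 0" . }
    then show ?thesis unfolding U_def by simp
  qed
  define K where "K = {y \<in> U. ipw w y y = 1}"
  have closedU: "closed U"
  proof -
    have "U = (\<Inter>b\<in>B. {y. ipw w b y = 0})" unfolding U_def by auto
    moreover have "closed {y. ipw w b y = 0}" for b
      by (rule closed_Collect_eq) (intro continuous_intros)+
    ultimately show ?thesis by auto
  qed
  have "closed {y. ipw w y y = 1}"
    by (rule closed_Collect_eq) (intro continuous_intros)+
  with closedU have closedK: "closed K" unfolding K_def
    by (simp add: Collect_conj_eq closed_Int Int_def[symmetric] Collect_mem_eq)
  have boundedK: "bounded K"
    unfolding bounded_iff
  proof (intro exI ballI)
    fix y assume "y \<in> K"
    then have "ipw w y y = 1" unfolding K_def by simp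
    then have "complex_of_real (\<Sum>i\<in>UNIV. w i * (cmod (y$i))^2) = 1" by (simp only: ipw_self)
    then have y1: "(\<Sum>i\<in>UNIV. w i * (cmod (y$i))^2) = 1" by (simp only: of_real_eq_1_iff)
    have comp: "cmod (y$i) \<le> 1 + 1 / w i" for i
    proof -
      have "w i * (cmod (y$i))^2 \<le> (\<Sum>i\<in>UNIV. w i * (cmod (y$i))^2)"
        by (rule member_le_sum) (auto intro!: mult_nonneg_nonneg less_imp_le[OF wpos])
      then have "w i * (cmod (y$i))^2 \<le> 1" using y1 by simp
      then have "(cmod (y$i))^2 \<le> 1 / w i" using wpos[of i] by (simp add: field_simps)
      moreover have "cmod (y$i) \<le> 1 + (cmod (y$i))^2"
      proof -
        have "0 \<le> (cmod (y$i) - 1)^2" by simp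
        then have h: "2 * cmod (y$i) \<le> (cmod (y$i))^2 + 1" by (simp add: power2_diff)
        have "0 \<le> (cmod (y$i))^2" by simp
        with h show ?thesis by linarith
      qed
      ultimately show ?thesis by simp
    qed
    have "norm y \<le> (\<Sum>i\<in>UNIV. cmod (y$i))"
      unfolding norm_vec_def by (rule L2_set_le_sum) simp
    also have "\<dots> \<le> (\<Sum>i\<in>UNIV. 1 + 1 / w i)"
      by (rule sum_mono) (rule comp)
    finally show "norm y \<le> (\<Sum>i\<in>UNIV. 1 + 1 / w i)" .
  qed
  have compactK: "compact K" using closedK boundedK by (simp add: compact_eq_bounded_closed)
  have normalize: "\<exists>c. complex_of_real c *s y \<in> K \<and> c * c * Re (ipw w y y) = 1 \<and> c > 0"
    if "y \<in> U" "y \<noteq> 0" for y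
  proof -
    define r where "r = Re (ipw w y y)"
    have yy: "ipw w y y = complex_of_real r" unfolding r_def by (rule ipw_self_real)
    have "r \<ge> 0" unfolding r_def by (rule ipw_self_Re_nonneg[OF wpos])
    moreover have "r \<noteq> 0" using ipw_self_eq0[of w y, OF wpos] yy that(2) by auto
    ultimately have r: "r > 0" by simp
    define c where "c = 1 / sqrt r"
    have cc: "c * c * r = 1" unfolding c_def using r
      by (simp add: field_simps)
    have "ipw w (complex_of_real c *s y) (complex_of_real c *s y) = complex_of_real (c * c * r)"
      by (simp add: ipw_scale_left ipw_scale_right yy)
    then have "complex_of_real c *s y \<in> K" unfolding K_def using Uscale[OF that(1)] cc by simp
    moreover have "c > 0" unfolding c_def using r by simp
    ultimately show ?thesis using cc unfolding r_def by blast
  qed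
  obtain u' where u': "u' \<in> K" using normalize[OF u] by blast
  define q where "q y = Re (ipw w y (A *v y))" for y
  have "continuous_on K q" unfolding q_def by (intro continuous_intros)
  then obtain v where vK: "v \<in> K" and vmax: "\<And>y. y \<in> K \<Longrightarrow> q y \<le> q v"
    using continuous_attains_sup[OF compactK _, of q] u' by blast
  define m where "m = q v"
  have bound: "q y \<le> m * Re (ipw w y y)" if yU: "y \<in> U" for y
  proof (cases "y = 0")
    case True then show ?thesis by (simp add: q_def)
  next
    case False
    then obtain c where c: "complex_of_real c *s y \<in> K" "c * c * Re (ipw w y y) = 1" "c > 0"
      using normalize[OF yU False] by blast
    have "q (complex_of_real c *s y) = c * c * q y"
      unfolding q_def by (simp add: mv_scale ipw_scale_left ipw_scale_right)
    then have "c * c * q y \<le> m" using vmax[OF c(1)] unfolding m_def by simp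
    then have "c * c * q y \<le> c * c * (m * Re (ipw w y y))" using c(2)
      by (simp add: algebra_simps)
    then show ?thesis using c(3) by simp
  qed
  define g where "g y = A *v y - complex_of_real m *s y" for y
  have g_sa: "ipw w (g x) y = ipw w x (g y)" for x y
    unfolding g_def by (simp add: ipw_diff_left ipw_diff_right ipw_scale_left ipw_scale_right sa)
  have g_lin: "g (x + complex_of_real t *s z) = g x + complex_of_real t *s g z" for x z t
    unfolding g_def by (simp add: mv_add mv_scale vec_eq_iff algebra_simps)
  have gU: "g y \<in> U" if "y \<in> U" for y
    unfolding g_def using that by (intro Udiff Uinv Uscale)
  have neg: "Re (ipw w y (g y)) \<le> 0" if "y \<in> U" for y
    using bound[OF that] unfolding g_def q_def
    by (simp add: ipw_diff_right ipw_scale_right)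
  have vU: "v \<in> U" and vv: "ipw w v v = 1" using vK unfolding K_def by auto
  have zero: "Re (ipw w v (g v)) = 0"
    unfolding g_def m_def q_def using vv by (simp add: ipw_diff_right ipw_scale_right)
  have re0: "Re (ipw w z (g v)) = 0" if "z \<in> U" for z
  proof (rule quad_zero)
    fix t :: real
    let ?p = "v + complex_of_real t *s z"
    have pU: "?p \<in> U" using vU that by (intro Uadd Uscale)
    have "ipw w ?p (g ?p) = ipw w v (g v) + complex_of_real t * ipw w v (g z)
         + complex_of_real t * ipw w z (g v) + complex_of_real t * complex_of_real t * ipw w z (g z)"
      unfolding g_lin by (simp add: ipw_add_left ipw_add_right ipw_scale_left ipw_scale_right algebra_simps)
    moreover have "ipw w v (g z) = cnj (ipw w z (g v))"
      using g_sa[of v z] ipw_sym[of w z "g v"] by simp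
    ultimately have "Re (ipw w ?p (g ?p)) = 2 * t * Re (ipw w z (g v)) + t^2 * Re (ipw w z (g z))"
      using zero by (simp add: power2_eq_square)
    then show "2 * t * Re (ipw w z (g v)) + t^2 * Re (ipw w z (g z)) \<le> 0" using neg[OF pU] by simp
  qed
  have ip0: "ipw w z (g v) = 0" if "z \<in> U" for z
  proof (rule complex_eqI)
    show "Re (ipw w z (g v)) = Re 0" using re0[OF that] by simp
    have "Re (ipw w (\<i> *s z) (g v)) = 0" using re0[OF Uscale[OF that]] .
    then show "Im (ipw w z (g v)) = Im 0" by (simp add: ipw_scale_left)
  qed
  have "g v = 0" using ipw_self_eq0[of w, OF wpos ip0[OF gU[OF vU]]] .
  then have "A *v v = complex_of_real m *s v" unfolding g_def by simp
  moreover have "v \<noteq> 0" using vv by auto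
  ultimately show ?thesis using vU by blast
qed

lemma diag_helper:
  fixes A P Q D :: "complex^'k^'k"
  assumes QP: "Q ** P = mat 1" and AP: "A ** P = P ** D" and D: "\<And>i j. i \<noteq> j \<Longrightarrow> D$i$j = 0"
  shows "diagonalizable_mat A"
proof -
  have PQ: "P ** Q = mat 1" using QP matrix_left_right_inverse by blast
  have inv: "invertible P" unfolding invertible_def using PQ QP by blast
  have "P ** matrix_inv P = mat 1 \<and> matrix_inv P ** P = mat 1"
    unfolding matrix_inv_def by (rule someI[of _ Q]) (use PQ QP in blast)
  then have "matrix_inv P = Q"
    by (metis QP matrix_mul_assoc matrix_mul_lid matrix_mul_rid)
  moreover have "A = P ** D ** Q"
    by (metis AP PQ matrix_mul_assoc matrix_mul_rid)
  ultimately show ?thesis unfolding diagonalizable_mat_def using inv D by metis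
qed

lemma weighted_sa_diag:
  fixes A :: "complex^'k^'k" and w :: "'k \<Rightarrow> real"
  assumes wpos: "\<And>i. w i > 0"
    and sa: "\<And>x y. ipw w (A *v x) y = ipw w x (A *v y)"
  shows "diagonalizable_mat A"
proof -
  define good where "good S \<longleftrightarrow> finite S \<and> (\<forall>b\<in>S. b \<noteq> 0 \<and> (\<exists>\<mu>. A *v b = \<mu> *s b)) \<and>
      (\<forall>b\<in>S. \<forall>c\<in>S. b \<noteq> c \<longrightarrow> ipw w b c = 0)" for S
  have ipnz: "ipw w b b \<noteq> 0" if "b \<noteq> 0" for b
    using ipw_self_eq0[of w b, OF wpos] that by blast
  have indep: "vec.independent S" if "good S" for S
  proof (rule vec.independent_if_scalars_zero)
    show "finite S" using that unfolding good_def by simp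
    fix f x assume sum0: "(\<Sum>x\<in>S. f x *s x) = 0" and xS: "x \<in> S"
    have "0 = ipw w x (\<Sum>y\<in>S. f y *s y)" using sum0 by simp
    also have "\<dots> = (\<Sum>y\<in>S. f y * ipw w x y)"
      using \<open>finite S\<close> by (rule ipw_sum_right)
    also have "\<dots> = f x * ipw w x x + (\<Sum>y\<in>S - {x}. f y * ipw w x y)"
      using \<open>finite S\<close> xS by (rule sum.remove)
    also have "(\<Sum>y\<in>S - {x}. f y * ipw w x y) = 0"
      using that xS unfolding good_def by (intro sum.neutral) auto
    finally have "f x * ipw w x x = 0" by simp
    moreover have "ipw w x x \<noteq> 0" using that xS unfolding good_def by (metis ipnz)
    ultimately show "f x = 0" by simp
  qed
  have cardle: "card S < CARD('k) + 1" if "good S" for S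
    using vec.independent_card_le_dim[OF subset_UNIV indep[OF that]]
    by (simp add: card_cart_basis)
  have "good {}" unfolding good_def by simp
  then obtain S where gS: "good S" and Smax: "\<And>S'. good S' \<Longrightarrow> card S' \<le> card S"
    using ex_has_greatest_nat[of good "{}" card "CARD('k) + 1"] cardle by blast
  have finS: "finite S" using gS unfolding good_def by simp
  define U where "U = {y. \<forall>b\<in>S. ipw w b y = 0}"
  have U0: "y = 0" if yU: "y \<in> U" for y
  proof (rule ccontr)
    assume y0: "y \<noteq> 0"
    then obtain v where vU: "v \<in> U" and v0: "v \<noteq> 0" and ve: "\<exists>\<mu>. A *v v = \<mu> *s v"
      using eigen_in_complement[OF wpos sa _ U_def yU y0] gS unfolding good_def by blast
    have vS: "v \<notin> S" using vU v0 ipnz unfolding U_def by blast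
    have vorth: "ipw w c v = 0" if "c \<in> S" for c using vU that unfolding U_def by simp
    have "\<forall>b\<in>insert v S. \<forall>c\<in>insert v S. b \<noteq> c \<longrightarrow> ipw w b c = 0"
    proof (intro ballI impI)
      fix b c assume b: "b \<in> insert v S" and c: "c \<in> insert v S" and bc: "b \<noteq> c"
      consider "b = v" "c \<in> S" | "b \<in> S" "c = v" | "b \<in> S" "c \<in> S" using b c bc by auto
      then show "ipw w b c = 0"
      proof cases
        case 1 then show ?thesis using vorth[of c] ipw_sym[of w v c] by simp
      next
        case 2 then show ?thesis using vorth[of b] by simp
      next
        case 3 then show ?thesis using gS bc unfolding good_def by blast
      qed
    qed
    moreover have "\<forall>b\<in>insert v S. b \<noteq> 0 \<and> (\<exists>\<mu>. A *v b = \<mu> *s b)"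
      using gS v0 ve unfolding good_def by blast
    ultimately have "good (insert v S)" using finS unfolding good_def by blast
    then have "card (insert v S) \<le> card S" by (rule Smax)
    with vS finS show False by simp
  qed
  have span: "y \<in> vec.span S" for y
  proof -
    define z where "z = y - (\<Sum>b\<in>S. (ipw w b y / ipw w b b) *s b)"
    have "z \<in> U" unfolding U_def mem_Collect_eq
    proof (intro ballI)
      fix c assume cS: "c \<in> S"
      have "ipw w c (\<Sum>b\<in>S. (ipw w b y / ipw w b b) *s b) = (\<Sum>b\<in>S. (ipw w b y / ipw w b b) * ipw w c b)"
        using finS by (rule ipw_sum_right)
      also have "\<dots> = (ipw w c y / ipw w c c) * ipw w c c + (\<Sum>b\<in>S - {c}. (ipw w b y / ipw w b b) * ipw w c b)"
        using finS cS by (rule sum.remove)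
      also have "(\<Sum>b\<in>S - {c}. (ipw w b y / ipw w b b) * ipw w c b) = 0"
        using gS cS unfolding good_def by (intro sum.neutral) auto
      also have "(ipw w c y / ipw w c c) * ipw w c c = ipw w c y"
        using gS cS ipnz unfolding good_def by auto
      finally show "ipw w c z = 0" unfolding z_def ipw_diff_right by simp
    qed
    then have "z = 0" by (rule U0)
    then have "y = (\<Sum>b\<in>S. (ipw w b y / ipw w b b) *s b)" unfolding z_def by simp
    also have "\<dots> \<in> vec.span S"
      by (intro vec.span_sum vec.span_scale vec.span_base)
    finally show ?thesis .
  qed
  have "card S = vec.dim (UNIV :: (complex^'k) set)"
    by (rule vec.basis_card_eq_dim) (use span indep[OF gS] in auto)
  then have cS: "card S = CARD('k)" by (simp add: card_cart_basis)
  obtain \<beta> where bij: "bij_betw \<beta> (UNIV :: 'k set) S"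
    using finite_same_card_bij[of "UNIV :: 'k set" S] finS cS by auto
  have \<beta>S: "\<beta> j \<in> S" for j using bij by (auto simp: bij_betw_def)
  have \<beta>inj: "\<beta> j = \<beta> l \<Longrightarrow> j = l" for j l using bij by (auto simp: bij_betw_def inj_on_def)
  define \<mu> where "\<mu> j = (SOME \<mu>. A *v \<beta> j = \<mu> *s \<beta> j)" for j
  have \<mu>: "A *v \<beta> j = \<mu> j *s \<beta> j" for j
    unfolding \<mu>_def by (rule someI_ex) (use gS \<beta>S in \<open>auto simp: good_def\<close>)
  have orth: "ipw w (\<beta> j) (\<beta> l) = (if j = l then ipw w (\<beta> j) (\<beta> j) else 0)" for j l
    using gS \<beta>S \<beta>inj unfolding good_def by (cases "j = l") (simp, metis)
  have nz: "ipw w (\<beta> j) (\<beta> j) \<noteq> 0" for j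
    using gS \<beta>S ipnz unfolding good_def by auto
  define P :: "complex^'k^'k" where "P = (\<chi> i j. \<beta> j $ i)"
  define Q :: "complex^'k^'k" where "Q = (\<chi> j i. complex_of_real (w i) * cnj (\<beta> j $ i) / ipw w (\<beta> j) (\<beta> j))"
  define D :: "complex^'k^'k" where "D = (\<chi> i j. if i = j then \<mu> j else 0)"
  have "Q ** P = mat 1"
  proof -
    have "(Q ** P) $ j $ l = (if j = l then 1 else 0)" for j l
    proof -
      have "(Q ** P) $ j $ l = ipw w (\<beta> j) (\<beta> l) / ipw w (\<beta> j) (\<beta> j)"
        unfolding Q_def P_def matrix_matrix_mult_def ipw_def
        by (simp add: sum_divide_distrib)
      then show ?thesis using orth[of j l] nz[of j] by (cases "j = l") simp_all
    qed
    then show ?thesis by (simp add: vec_eq_iff mat_def)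
  qed
  moreover have "A ** P = P ** D"
  proof -
    have "(A ** P) $ i $ j = (P ** D) $ i $ j" for i j
    proof -
      have "(A ** P) $ i $ j = (A *v \<beta> j) $ i"
        unfolding P_def matrix_matrix_mult_def matrix_vector_mult_def by simp
      also have "\<dots> = \<mu> j * \<beta> j $ i" using \<mu>[of j] by simp
      also have "\<dots> = (P ** D) $ i $ j"
        unfolding P_def D_def matrix_matrix_mult_def
        by (simp add: if_distrib[of "\<lambda>x. _ * x"] sum.delta' mult.commute cong: if_cong)
      finally show ?thesis .
    qed
    then show ?thesis by (simp add: vec_eq_iff)
  qed
  moreover have "\<And>i j. i \<noteq> j \<Longrightarrow> D$i$j = 0" unfolding D_def by simp
  ultimately show ?thesis by (rule diag_helper)
qed



lemma L_group:
  fixes \<tau> :: "'v::finite \<Rightarrow> 'k::finite" and f :: "'v \<Rightarrow> 'a::comm_monoid_add"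
  shows "(\<Sum>v\<in>UNIV. f v) = (\<Sum>j\<in>UNIV. \<Sum>v\<in>{v. \<tau> v = j}. f v)"
  using sum.group[of UNIV UNIV \<tau> f] by simp

lemma L_group2:
  fixes \<tau> :: "'v::finite \<Rightarrow> 'k::finite" and G :: "'k \<Rightarrow> 'a::comm_semiring_1"
  shows "(\<Sum>v\<in>UNIV. G (\<tau> v) * \<phi> v) = (\<Sum>j\<in>UNIV. G j * (\<Sum>v\<in>{v. \<tau> v = j}. \<phi> v))"
  by (subst L_group[of _ \<tau>]) (simp add: sum_distrib_left)

lemma L_ifsum:
  fixes A :: "'v::finite set"
  shows "(\<Sum>v\<in>A. if P v then c else 0) = of_nat (card {v\<in>A. P v}) * (c::'a::comm_semiring_1)"
  using sum.inter_filter[of A "\<lambda>_. c" P] by simp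

lemma L_count:
  fixes \<tau> :: "'v::finite \<Rightarrow> 'k::finite" and h :: "'k \<Rightarrow> 'a::comm_semiring_1"
  shows "(\<Sum>v\<in>UNIV. if P v then h (\<tau> v) else 0) = (\<Sum>j\<in>UNIV. of_nat (card {v. P v \<and> \<tau> v = j}) * h j)"
proof -
  have "(\<Sum>v\<in>UNIV. if P v then h (\<tau> v) else 0) = (\<Sum>j\<in>UNIV. \<Sum>v\<in>{v. \<tau> v = j}. if P v then h (\<tau> v) else 0)"
    by (rule L_group)
  also have "\<dots> = (\<Sum>j\<in>UNIV. \<Sum>v\<in>{v. \<tau> v = j}. if P v then h j else 0)"
    by (intro sum.cong) auto
  also have "\<dots> = (\<Sum>j\<in>UNIV. of_nat (card {v. P v \<and> \<tau> v = j}) * h j)"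
    by (intro sum.cong refl, subst L_ifsum) (simp add: conj_commute)
  finally show ?thesis .
qed

lemma card_as_sum: "card {v::'v::finite. P v} = (\<Sum>v\<in>UNIV. if P v then 1 else 0)"
  using L_ifsum[of P "1::nat" UNIV] by simp

lemma sa_from_entries:
  fixes A :: "complex^'k^'k" and w :: "'k \<Rightarrow> real"
  assumes ent: "\<And>i j. complex_of_real (w i) * cnj (A$i$j) = complex_of_real (w j) * A$j$i"
  shows "ipw w (A *v x) y = ipw w x (A *v y)"
proof -
  have "ipw w (A *v x) y = (\<Sum>i\<in>UNIV. \<Sum>j\<in>UNIV. complex_of_real (w i) * cnj (A$i$j) * cnj (x$j) * y$i)"
    unfolding ipw_def matrix_vector_mult_def by (simp add: sum_distrib_left sum_distrib_right algebra_simps)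
  also have "\<dots> = (\<Sum>i\<in>UNIV. \<Sum>j\<in>UNIV. complex_of_real (w j) * A$j$i * cnj (x$j) * y$i)"
    by (simp add: ent)
  also have "\<dots> = (\<Sum>j\<in>UNIV. \<Sum>i\<in>UNIV. complex_of_real (w j) * A$j$i * cnj (x$j) * y$i)"
    by (rule sum.swap)
  also have "\<dots> = ipw w x (A *v y)"
    unfolding ipw_def matrix_vector_mult_def by (simp add: sum_distrib_left sum_distrib_right algebra_simps)
  finally show ?thesis .
qed



theorem mainTheorem1:
  fixes T :: "complex^'v^'v" and S :: "nat^'k^'k" and tau :: "'v \<Rightarrow> 'k"
    and b :: "real^'k" and F :: "complex^'k^'k"
  assumes "S_regular_matrix T S tau b F"
  shows "diagonalizable_mat (quotient_mat S b F) \<and>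
         (\<forall>lam psi. is_eigenvector (quotient_mat S b F) lam psi \<longrightarrow>
            is_eigenvector T lam (\<chi> v. psi $ tau v)) \<and>
         (\<forall>lam phi. is_eigenvector T lam phi \<and> \<not> is_eigenvalue (quotient_mat S b F) lam \<longrightarrow>
            (\<forall>i. (\<Sum>v\<in>{v. tau v = i}. phi $ v) = 0) \<and> (\<Sum>v\<in>UNIV. phi $ v) = 0)"
proof -
  define E where "E = und_adj T"
  define M where "M = quotient_mat S b F"
  have herm: "\<And>u v. T$u$v = cnj (T$v$u)" and surj: "surj tau"
    and Scard: "\<And>v j. card {u. E v u \<and> tau u = j} = S$(tau v)$j"
    and diagT: "\<And>u. T$u$u = complex_of_real (b$(tau u))"
    and Fnz: "\<And>i j. F$i$j \<noteq> 0"
    and TF: "\<And>u v. E u v \<Longrightarrow> T$u$v = F$(tau u)$(tau v)"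
    using assms unfolding S_regular_matrix_def S_regular_graph_def hermitian_mat_def E_def by blast+
  have Esym: "E u v \<Longrightarrow> E v u" for u v
    unfolding E_def und_adj_def using herm[of v u] by auto
  have Eirr: "\<not> E u u" for u unfolding E_def und_adj_def by simp
  have T0: "u \<noteq> v \<Longrightarrow> \<not> E u v \<Longrightarrow> T$u$v = 0" for u v unfolding E_def und_adj_def by simp
  have Tdecomp: "T$u$v = (if v = u then complex_of_real (b$(tau u)) else 0)
      + (if E u v then F$(tau u)$(tau v) else 0)" for u v
    using diagT[of u] TF[of u v] T0[of u v] Eirr[of u] by auto
  define n where "n i = card {v. tau v = i}" for i
  have npos: "n i > 0" for i
  proof -
    obtain v where "tau v = i" using surj by (metis surjD)
    then show ?thesis unfolding n_def by (auto intro!: card_gt_0_iff[THEN iffD2])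
  qed
  have Srow: "S$i$j = card {u. E v u \<and> tau u = j}" if "tau v = i" for v i j
    using Scard[of v j] that by simp
  define cnt where "cnt i j = (\<Sum>u\<in>UNIV. \<Sum>v\<in>UNIV. if tau u = i \<and> tau v = j \<and> E u v then 1 else (0::nat))" for i j
  have cnt_eq: "cnt i j = n i * S$i$j" for i j
  proof -
    have "cnt i j = (\<Sum>u\<in>UNIV. if tau u = i then S$i$j else 0)"
      unfolding cnt_def
    proof (intro sum.cong refl)
      fix u
      show "(\<Sum>v\<in>UNIV. if tau u = i \<and> tau v = j \<and> E u v then 1 else (0::nat)) = (if tau u = i then S$i$j else 0)"
      proof (cases "tau u = i")
        case True
        then show ?thesis using Srow[OF True, of j] card_as_sum[of "\<lambda>v. E u v \<and> tau v = j"]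
          by (simp add: conj_commute)
      qed simp
    qed
    also have "\<dots> = n i * S$i$j" unfolding n_def using L_ifsum[of "\<lambda>u. tau u = i" "S$i$j" UNIV] by simp
    finally show ?thesis .
  qed
  have cnt_sym: "cnt i j = cnt j i" for i j
    unfolding cnt_def by (subst sum.swap) (intro sum.cong refl, auto intro: Esym)
  have dc: "n i * S$i$j = n j * S$j$i" for i j using cnt_eq cnt_sym by metis
  have Fherm: "F$j$i = cnj (F$i$j)" if "S$i$j > 0" for i j
  proof -
    obtain u where u: "tau u = i" using surj by (metis surjD)
    then have "card {v. E u v \<and> tau v = j} > 0" using Srow[OF u, of j] that by simp
    then obtain v where "E u v" "tau v = j" by (metis (mono_tags, lifting) Collect_empty_eq card_0_eq finite less_not_refl)
    then show ?thesis using TF[of u v] TF[of v u] Esym[of u v] herm[of v u] u by simp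
  qed
  have Ment: "M$i$j = of_nat (S$i$j) * F$i$j + (if i = j then complex_of_real (b$i) else 0)" for i j
    unfolding M_def quotient_mat_def by simp
  have part1: "diagonalizable_mat M"
  proof (rule weighted_sa_diag[of "\<lambda>i. real (n i)"])
    show "\<And>i. real (n i) > 0" using npos by simp
    show "ipw (\<lambda>i. real (n i)) (M *v x) y = ipw (\<lambda>i. real (n i)) x (M *v y)" for x y
    proof (rule sa_from_entries)
      fix i j
      show "complex_of_real (real (n i)) * cnj (M$i$j) = complex_of_real (real (n j)) * M$j$i"
      proof (cases "i = j")
        case True
        have "of_nat (S$i$i) * cnj (F$i$i) = of_nat (S$i$i) * F$i$i"
          using Fherm[of i i] by (cases "S$i$i = 0") simp_all
        then show ?thesis using True by (simp add: Ment)
      next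
        case False
        show ?thesis
        proof (cases "S$i$j = 0")
          case True
          then have "S$j$i = 0" using dc[of i j] npos[of j] by simp
          then show ?thesis using True False by (simp add: Ment)
        next
          case Sij: False
          have "complex_of_nat (n i * S$i$j) = complex_of_nat (n j * S$j$i)" using dc[of i j] by simp
          then have "complex_of_nat (n i) * complex_of_nat (S$i$j) * cnj (F$i$j) =
                     complex_of_nat (n j) * complex_of_nat (S$j$i) * F$j$i"
            using Fherm[of i j] Sij by simp
          then show ?thesis using False by (simp add: Ment mult.assoc)
        qed
      qed
    qed
  qed
  have part2: "is_eigenvector T lam (\<chi> v. psi $ tau v)" if ev: "is_eigenvector M lam psi" for lam psi
  proof -
    have Mpsi: "M *v psi = lam *s psi" and psi0: "psi \<noteq> 0" using ev unfolding is_eigenvector_def by auto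
    have Mrow: "(M *v psi)$i = (\<Sum>j\<in>UNIV. of_nat (S$i$j) * (F$i$j * psi$j)) + complex_of_real (b$i) * psi$i" for i
      unfolding matrix_vector_mult_def Ment
      by (simp add: distrib_right sum.distrib if_distrib[of "\<lambda>x. x * _"] sum.delta mult.assoc cong: if_cong)
    have "(T *v (\<chi> v. psi $ tau v))$u = lam * psi $ tau u" for u
    proof -
      have "(T *v (\<chi> v. psi $ tau v))$u = (\<Sum>v\<in>UNIV. T$u$v * psi$(tau v))"
        unfolding matrix_vector_mult_def by simp
      also have "\<dots> = (\<Sum>v\<in>UNIV. (if v = u then complex_of_real (b$(tau u)) * psi$(tau u) else 0)
          + (if E u v then F$(tau u)$(tau v) * psi$(tau v) else 0))"
        by (intro sum.cong refl) (simp add: Tdecomp[of u] distrib_right)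
      also have "\<dots> = complex_of_real (b$(tau u)) * psi$(tau u) + (\<Sum>v\<in>UNIV. if E u v then F$(tau u)$(tau v) * psi$(tau v) else 0)"
        by (simp add: sum.distrib sum.delta')
      also have "(\<Sum>v\<in>UNIV. if E u v then F$(tau u)$(tau v) * psi$(tau v) else 0)
          = (\<Sum>j\<in>UNIV. of_nat (card {v. E u v \<and> tau v = j}) * (F$(tau u)$j * psi$j))"
        by (rule L_count[where h="\<lambda>j. F$(tau u)$j * psi$j"])
      also have "\<dots> = (\<Sum>j\<in>UNIV. of_nat (S$(tau u)$j) * (F$(tau u)$j * psi$j))"
        using Scard by simp
      finally have "(T *v (\<chi> v. psi $ tau v))$u = (M *v psi)$(tau u)" using Mrow by simp
      then show ?thesis using Mpsi by simp
    qed
    then have "T *v (\<chi> v. psi $ tau v) = lam *s (\<chi> v. psi $ tau v)" by (simp add: vec_eq_iff)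
    moreover have "(\<chi> v. psi $ tau v) \<noteq> 0"
    proof -
      obtain i where "psi$i \<noteq> 0" using psi0 by (auto simp: vec_eq_iff)
      moreover obtain v where "tau v = i" using surj by (metis surjD)
      ultimately show ?thesis by (auto simp: vec_eq_iff)
    qed
    ultimately show ?thesis unfolding is_eigenvector_def by simp
  qed
  have part3: "(\<forall>i. (\<Sum>v\<in>{v. tau v = i}. phi $ v) = 0) \<and> (\<Sum>v\<in>UNIV. phi $ v) = 0"
    if ev: "is_eigenvector T lam phi" and nev: "\<not> is_eigenvalue M lam" for lam phi
  proof -
    have Tphi: "T *v phi = lam *s phi" using ev unfolding is_eigenvector_def by auto
    define x where "x i = (\<Sum>v\<in>{v. tau v = i}. phi $ v)" for i
    have colsum: "(\<Sum>u\<in>{u. tau u = i}. T$u$v) = (if tau v = i then complex_of_real (b$i) else 0)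
        + of_nat (S$(tau v)$i) * F$i$(tau v)" for i v
    proof -
      have "(\<Sum>u\<in>{u. tau u = i}. T$u$v) = (\<Sum>u\<in>{u. tau u = i}. (if u = v then complex_of_real (b$(tau v)) else 0)
          + (if E v u then F$i$(tau v) else 0))"
        by (intro sum.cong refl) (auto simp: Tdecomp intro: Esym)
      also have "\<dots> = (\<Sum>u\<in>{u. tau u = i}. if u = v then complex_of_real (b$(tau v)) else 0)
          + (\<Sum>u\<in>{u. tau u = i}. if E v u then F$i$(tau v) else 0)"
        by (rule sum.distrib)
      also have "(\<Sum>u\<in>{u. tau u = i}. if u = v then complex_of_real (b$(tau v)) else 0)
          = (if tau v = i then complex_of_real (b$i) else 0)"
        by (simp add: sum.delta')
      also have "(\<Sum>u\<in>{u. tau u = i}. if E v u then F$i$(tau v) else 0)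
          = of_nat (card {u \<in> {u. tau u = i}. E v u}) * F$i$(tau v)"
        by (rule L_ifsum)
      also have "card {u \<in> {u. tau u = i}. E v u} = S$(tau v)$i"
        using Scard[of v i] by (simp add: conj_commute)
      finally show ?thesis .
    qed
    have key: "lam * x i = complex_of_real (b$i) * x i + (\<Sum>j\<in>UNIV. of_nat (S$j$i) * F$i$j * x j)" for i
    proof -
      have "lam * x i = (\<Sum>u\<in>{u. tau u = i}. (T *v phi)$u)"
        unfolding x_def Tphi by (simp add: sum_distrib_left)
      also have "\<dots> = (\<Sum>u\<in>{u. tau u = i}. \<Sum>v\<in>UNIV. T$u$v * phi$v)"
        unfolding matrix_vector_mult_def by simp
      also have "\<dots> = (\<Sum>v\<in>UNIV. (\<Sum>u\<in>{u. tau u = i}. T$u$v) * phi$v)"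
        by (subst sum.swap) (simp add: sum_distrib_right)
      also have "\<dots> = (\<Sum>v\<in>UNIV. ((if tau v = i then complex_of_real (b$i) else 0)
          + of_nat (S$(tau v)$i) * F$i$(tau v)) * phi$v)"
        by (simp add: colsum)
      also have "\<dots> = (\<Sum>j\<in>UNIV. ((if j = i then complex_of_real (b$i) else 0)
          + of_nat (S$j$i) * F$i$j) * x j)"
        unfolding x_def by (rule L_group2[where G="\<lambda>j. (if j = i then complex_of_real (b$i) else 0) + of_nat (S$j$i) * F$i$j"])
      also have "\<dots> = complex_of_real (b$i) * x i + (\<Sum>j\<in>UNIV. of_nat (S$j$i) * F$i$j * x j)"
        by (simp add: distrib_right sum.distrib if_distrib[of "\<lambda>z. z * _"] sum.delta cong: if_cong)
      finally show ?thesis .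
    qed
    define y where "y = (\<chi> j. x j / of_nat (n j))"
    have "M *v y = lam *s y"
    proof -
      have "(M *v y)$i = lam * y$i" for i
      proof -
        have ratio: "of_nat (S$i$j) * (x j / of_nat (n j)) = of_nat (S$j$i) * x j / of_nat (n i)" for j
        proof -
          have "complex_of_nat (n i * S$i$j) = complex_of_nat (n j * S$j$i)" using dc[of i j] by simp
          then have "complex_of_nat (n i) * complex_of_nat (S$i$j) = complex_of_nat (n j) * complex_of_nat (S$j$i)" by simp
          then show ?thesis using npos[of i] npos[of j] by (simp add: field_simps)
        qed
        have "(M *v y)$i = (\<Sum>j\<in>UNIV. of_nat (S$i$j) * F$i$j * (x j / of_nat (n j))) + complex_of_real (b$i) * (x i / of_nat (n i))"
          unfolding matrix_vector_mult_def Ment y_def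
          by (simp add: distrib_right add_divide_distrib sum.distrib if_distrib[of "\<lambda>z. z * _"] if_distrib[of "\<lambda>z. z / _"] sum.delta mult.assoc cong: if_cong)
        also have "\<dots> = (\<Sum>j\<in>UNIV. of_nat (S$j$i) * F$i$j * x j / of_nat (n i)) + complex_of_real (b$i) * (x i / of_nat (n i))"
        proof (intro arg_cong2[where f="(+)"] sum.cong refl)
          fix j
          have "of_nat (S$i$j) * F$i$j * (x j / of_nat (n j)) = F$i$j * (of_nat (S$i$j) * (x j / of_nat (n j)))"
            by (simp only: mult.commute mult.left_commute)
          also have "\<dots> = F$i$j * (of_nat (S$j$i) * x j / of_nat (n i))" by (simp only: ratio)
          also have "\<dots> = of_nat (S$j$i) * F$i$j * x j / of_nat (n i)" by simp
          finally show "of_nat (S$i$j) * F$i$j * (x j / of_nat (n j)) = of_nat (S$j$i) * F$i$j * x j / of_nat (n i)" .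
        qed
        also have "\<dots> = (complex_of_real (b$i) * x i + (\<Sum>j\<in>UNIV. of_nat (S$j$i) * F$i$j * x j)) / of_nat (n i)"
          by (simp add: sum_divide_distrib add_divide_distrib)
        also have "\<dots> = lam * y$i" unfolding key[symmetric] y_def by simp
        finally show ?thesis .
      qed
      then show ?thesis by (simp add: vec_eq_iff)
    qed
    then have "y = 0" using nev unfolding is_eigenvalue_def is_eigenvector_def by blast
    then have x0: "x i = 0" for i using npos[of i] by (simp add: vec_eq_iff y_def) (metis less_irrefl)
    moreover have "(\<Sum>v\<in>UNIV. phi $ v) = (\<Sum>j\<in>UNIV. x j)"
      unfolding x_def by (rule L_group)
    ultimately show ?thesis unfolding x_def by simp
  qed
  show ?thesis using part1 part2 part3 unfolding M_def by blast
qed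

end
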